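(* Let $N\subset M\subset G$ be subgroups, both normal in $G$, with $N$ contained in the center of $M$, and let $\sigma$ be a proper closed ribbon. For $n\in N$ and $t\in G/M$ put $J_\sigma^{n,t}:=\sum_{x\in t}F_\sigma^{n,x}$ (here $t$ is regarded as a subset of $G$). Then $J_\sigma^{n,t}=\sum_{C}K_\sigma^{\{n\},C}$, where the sum runs over those $C\in\mathrm{Conj}(G/N,M/N)$ whose elements (as cosets of $N$) are contained in $t$, and $K_\sigma^{\{n\},C}$ is the operator $K_\sigma^{DC}$ with $D=\{n\}$ (a conjugacy class of $N'_C$ since $n$ is central in $M$).
   Context: Setting. $G$ is a finite group; $\bar g$ denotes $g^{-1}$. A lattice is embedded in an orientable surface, with vertex set $V$, edge set $E$, face set $F$; every edge is oriented, no edge has equal endpoints, and a face with $s$ edges has $s$ distinct vertices (same conditions for the dual lattice). Dual edges $e^*$ are oriented so that $e^*$ crosses $e$ from right to left. For each edge $e$ there is an inverse edge $\bar e$ with reversed orientation ($\bar{\bar e}=e$); $\bar E$ is the set of inverse edges. Each edge $e\in E$ carries a qudit $\mathbb C[G]$ with orthonormal basis $\{|g\rangle\}_{g\in G}$; $\mathcal H_G=\bigotimes_{e\in E}\mathbb C[G]$. Single-qudit operators: $L^h=\sum_g|hg\rangle\langle g|$, $T^g=|g\rangle\langle g|$, $I=\sum_g|\bar g\rangle\langle g|$. Sites and triangles. A site is a pair $s=(v,f)$ with $f$ a face and $v$ a vertex of $f$; write $s=(v_s,f_s)$. A direct triangle $\tau=(s_0,s_1,e)$ consists of sites $s_0,s_1$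 with $f_{s_0}=f_{s_1}$ and $e\in E\cup\bar E$ going from $v_{s_0}$ to $v_{s_1}$, such that $s_0,s_1,e$ form a triangle with sides in counterclockwise order. A dual triangle $\tau=(s_0,s_1,e^* )$ consists of sites with $v_{s_0}=v_{s_1}$ and a dual edge $e^*$ ($e\in E\cup\bar E$) going from the dual vertex $f_{s_0}^*$ to $f_{s_1}^*$, with sides in clockwise order. Write $\partial_i\tau=s_i$, $e_\tau=e$. The complementary triangle $\bar\tau$ is the triangle of the same type with edge $\bar e_\tau$. Triangle operators: for a dual triangle $L_\tau^h:=I^xL^hI^x$, for a direct triangle $T_\tau^g:=I^xT^gI^x$, acting on the qudit of the underlying edge of $e_\tau$, with $x=0$ if $e_\tau\in E$ and $x=1$ if $e_\tau\in\bar E$. Ribbons. A strip is either trivial (a single site) or a sequence of triangles $\rho=(\tau_1,\dots,\tau_n)$ with $\partial_1\tau_i=\partial_0\tau_{i+1}$; its ends are $\partial_0\rho=\partial_0\tau_1$, $\partial_1\rho=\partial_1\tau_n$; composition $\rho_1\rho_2$ is concatenation when $\partial_1\rho_1=\partial_0\rho_2$. If $\tau'_1,\dots,\tau'_q$ are its direct triangles in order, its direct path has vertices $v_0=v_{\partial_0\tau'_1},v_1=v_{\partial_1\tau'_1},\dots,v_q=v_{\partial_1\tau'_q}$; its dual path has the faces $f_0,\dots,f_r$ defined analogously from its dual triangles. A ribbon is a strip such that no triangle occurs together with its complement, the $v_i$ are pairwise distinct except possibly $v_0=v_q$, and the $f_i$ are pairwise distinct except possibly $f_0=f_r$. A ribbon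 is direct (dual) if it consists only of direct (dual) triangles, proper if it is neither, open if $v_{\partial_0\rho}\ne v_{\partial_1\rho}$ and $f_{\partial_0\rho}\ne f_{\partial_1\rho}$, closed if $\partial_0\rho=\partial_1\rho$. Ribbon operators. For a trivial ribbon $F^{h,g}=\delta_{1,g}$; for a dual triangle $F_\tau^{h,g}=\delta_{1,g}L_\tau^h$; for a direct triangle $F_\tau^{h,g}=T_\tau^g$; for a ribbon $\rho=\rho_1\rho_2$, $F_\rho^{h,g}=\sum_{k\in G}F_{\rho_1}^{h,k}F_{\rho_2}^{\bar khk,\bar kg}$ (independent of the decomposition). Closed-ribbon operators. $\mathrm{Conj}(G/N,M/N)$ is the set of orbits of $G/N$ under conjugation by $M/N$. For each such orbit $C$ fix $r_C\in G$ with $r_CN\in C$, let $N'_C:=\{m\in M: m r_C\bar m\bar r_C\in N\}$ and let $Q_C\subset M$ be a set of representatives of $M/N'_C$. For $D$ a conjugacy class of $N'_C$, $K_\sigma^{DC}:=\sum_{q\in Q_C}\sum_{d\in D}\sum_{n\in N}F_\sigma^{\,qd\bar q,\;qr_C\bar q n}$. *)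

theory Defs
  imports Complex_Main "HOL-Library.Function_Algebras"
begin

text \<open>An oriented edge (element of E or its inverse) is a pair (e, b):
  b = False means e itself, b = True means the inverse edge.\<close>

record ('v, 'e, 'f) lattice =
  ltail  :: "'e \<Rightarrow> 'v"
  lhead  :: "'e \<Rightarrow> 'v"
  lleft  :: "'e \<Rightarrow> 'f"
  lright :: "'e \<Rightarrow> 'f"

definition lattice_ok :: "('v, 'e, 'f) lattice \<Rightarrow> bool" where
  "lattice_ok L \<longleftrightarrow> (\<forall>e. ltail L e \<noteq> lhead L e \<and> lleft L e \<noteq> lright L e)"

type_synonym 'e dart = "'e \<times> bool"

definition rev_dart :: "'e dart \<Rightarrow> 'e dart" where
  "rev_dart d = (fst d, \<not> snd d)"

definition dtail :: "('v, 'e, 'f) lattice \<Rightarrow> 'e dart \<Rightarrow> 'v" where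
  "dtail L d = (if snd d then lhead L (fst d) else ltail L (fst d))"
definition dhead :: "('v, 'e, 'f) lattice \<Rightarrow> 'e dart \<Rightarrow> 'v" where
  "dhead L d = (if snd d then ltail L (fst d) else lhead L (fst d))"
definition dleft :: "('v, 'e, 'f) lattice \<Rightarrow> 'e dart \<Rightarrow> 'f" where
  "dleft L d = (if snd d then lright L (fst d) else lleft L (fst d))"
definition dright :: "('v, 'e, 'f) lattice \<Rightarrow> 'e dart \<Rightarrow> 'f" where
  "dright L d = (if snd d then lleft L (fst d) else lright L (fst d))"

text \<open>Sites: (v, f) with v a vertex of f.\<close>
definition is_site :: "('v, 'e, 'f) lattice \<Rightarrow> 'v \<times> 'f \<Rightarrow> bool" where
  "is_site L s \<longleftrightarrow> (\<exists>d. dtail L d = fst s \<and> (dleft L d = snd s \<or> dright L d = snd s))"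

datatype ('v, 'f, 'e) tri =
    DirT "'v \<times> 'f" "'v \<times> 'f" "'e dart"
  | DualT "'v \<times> 'f" "'v \<times> 'f" "'e dart"

fun bd0 :: "('v, 'f, 'e) tri \<Rightarrow> 'v \<times> 'f" where
  "bd0 (DirT s0 s1 d) = s0" | "bd0 (DualT s0 s1 d) = s0"
fun bd1 :: "('v, 'f, 'e) tri \<Rightarrow> 'v \<times> 'f" where
  "bd1 (DirT s0 s1 d) = s1" | "bd1 (DualT s0 s1 d) = s1"
fun tdart :: "('v, 'f, 'e) tri \<Rightarrow> 'e dart" where
  "tdart (DirT s0 s1 d) = d" | "tdart (DualT s0 s1 d) = d"
fun is_direct :: "('v, 'f, 'e) tri \<Rightarrow> bool" where
  "is_direct (DirT s0 s1 d) = True" | "is_direct (DualT s0 s1 d) = False"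

text \<open>Direct triangle (s0,s1,e): same face f, e goes from v_{s0} to v_{s1};
  the sides s0, s1, e in counterclockwise order means f lies to the right of e.
  Dual triangle (s0,s1,e*): same vertex v, e* goes from f_{s0} to f_{s1}
  (so f_{s0} is right of e, f_{s1} left of e, as e* crosses e from right to
  left); sides in clockwise order means v lies to the left of e*, i.e. v is
  the tail of e.\<close>
fun valid_tri :: "('v, 'e, 'f) lattice \<Rightarrow> ('v, 'f, 'e) tri \<Rightarrow> bool" where
  "valid_tri L (DirT s0 s1 d) \<longleftrightarrow>
     is_site L s0 \<and> is_site L s1 \<and> snd s0 = snd s1 \<and>
     dtail L d = fst s0 \<and> dhead L d = fst s1 \<and> dright L d = snd s0"
| "valid_tri L (DualT s0 s1 d) \<longleftrightarrow>
     is_site L s0 \<and> is_site L s1 \<and> fst s0 = fst s1 \<and>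
     dright L d = snd s0 \<and> dleft L d = snd s1 \<and> dtail L d = fst s0"

definition complementary :: "('v, 'f, 'e) tri \<Rightarrow> ('v, 'f, 'e) tri \<Rightarrow> bool" where
  "complementary \<tau> \<tau>' \<longleftrightarrow> is_direct \<tau> = is_direct \<tau>' \<and> tdart \<tau>' = rev_dart (tdart \<tau>)"

definition is_strip :: "('v, 'e, 'f) lattice \<Rightarrow> ('v, 'f, 'e) tri list \<Rightarrow> bool" where
  "is_strip L \<rho> \<longleftrightarrow> \<rho> \<noteq> [] \<and> (\<forall>\<tau>\<in>set \<rho>. valid_tri L \<tau>) \<and>
     (\<forall>i. Suc i < length \<rho> \<longrightarrow> bd1 (\<rho> ! i) = bd0 (\<rho> ! Suc i))"

definition direct_path :: "('v, 'f, 'e) tri list \<Rightarrow> 'v list" where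
  "direct_path \<rho> = (let ds = filter is_direct \<rho> in
     if ds = [] then [] else fst (bd0 (hd ds)) # map (\<lambda>\<tau>. fst (bd1 \<tau>)) ds)"

definition dual_path :: "('v, 'f, 'e) tri list \<Rightarrow> 'f list" where
  "dual_path \<rho> = (let ds = filter (\<lambda>\<tau>. \<not> is_direct \<tau>) \<rho> in
     if ds = [] then [] else snd (bd0 (hd ds)) # map (\<lambda>\<tau>. snd (bd1 \<tau>)) ds)"

definition path_ok :: "'a list \<Rightarrow> bool" where
  "path_ok xs \<longleftrightarrow> distinct (tl xs) \<and> distinct (butlast xs)"

definition is_ribbon :: "('v, 'e, 'f) lattice \<Rightarrow> ('v, 'f, 'e) tri list \<Rightarrow> bool" where
  "is_ribbon L \<rho> \<longleftrightarrow> is_strip L \<rho> \<and>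
     (\<forall>\<tau>\<in>set \<rho>. \<forall>\<tau>'\<in>set \<rho>. \<not> complementary \<tau> \<tau>') \<and>
     path_ok (direct_path \<rho>) \<and> path_ok (dual_path \<rho>)"

definition proper_ribbon :: "('v, 'f, 'e) tri list \<Rightarrow> bool" where
  "proper_ribbon \<rho> \<longleftrightarrow> (\<exists>\<tau>\<in>set \<rho>. is_direct \<tau>) \<and> (\<exists>\<tau>\<in>set \<rho>. \<not> is_direct \<tau>)"

definition closed_ribbon :: "('v, 'f, 'e) tri list \<Rightarrow> bool" where
  "closed_ribbon \<rho> \<longleftrightarrow> \<rho> \<noteq> [] \<and> bd0 (hd \<rho>) = bd1 (last \<rho>)"

text \<open>An operator is given by its matrix in the product basis |c>, c : E \<Rightarrow> G:
  A c' c = <c'|A|c>. The group G is written additively (group_add need not be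
  commutative): g + h is the product gh, -g the inverse, 0 the unit.\<close>

type_synonym ('e, 'g) op = "('e \<Rightarrow> 'g) \<Rightarrow> ('e \<Rightarrow> 'g) \<Rightarrow> complex"

definition opmult :: "('e::finite, 'g::finite) op \<Rightarrow> ('e, 'g) op \<Rightarrow> ('e, 'g) op" where
  "opmult A B = (\<lambda>c' c. \<Sum>c''\<in>UNIV. A c' c'' * B c'' c)"

definition opid :: "('e, 'g) op" where
  "opid = (\<lambda>c' c. if c' = c then 1 else 0)"

definition qL :: "'g::group_add \<Rightarrow> 'g \<Rightarrow> 'g \<Rightarrow> complex" where
  "qL h = (\<lambda>a b. if a = h + b then 1 else 0)"
definition qT :: "'g \<Rightarrow> 'g \<Rightarrow> 'g \<Rightarrow> complex" where
  "qT g = (\<lambda>a b. if a = g \<and> b = g then 1 else 0)"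
definition qI :: "'g::group_add \<Rightarrow> 'g \<Rightarrow> complex" where
  "qI = (\<lambda>a b. if a = - b then 1 else 0)"
definition qmult :: "('g::finite \<Rightarrow> 'g \<Rightarrow> complex) \<Rightarrow> ('g \<Rightarrow> 'g \<Rightarrow> complex) \<Rightarrow> 'g \<Rightarrow> 'g \<Rightarrow> complex" where
  "qmult u w = (\<lambda>a b. \<Sum>x\<in>UNIV. u a x * w x b)"

definition conjI :: "bool \<Rightarrow> ('g::{group_add,finite} \<Rightarrow> 'g \<Rightarrow> complex) \<Rightarrow> 'g \<Rightarrow> 'g \<Rightarrow> complex" where
  "conjI b u = (if b then qmult qI (qmult u qI) else u)"

definition on_edge :: "'e \<Rightarrow> ('g \<Rightarrow> 'g \<Rightarrow> complex) \<Rightarrow> ('e, 'g) op" where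
  "on_edge e u = (\<lambda>c' c. if (\<forall>x. x \<noteq> e \<longrightarrow> c' x = c x) then u (c' e) (c e) else 0)"

fun tri_F :: "('v, 'f, 'e) tri \<Rightarrow> 'g::{group_add,finite} \<Rightarrow> 'g \<Rightarrow> ('e, 'g) op" where
  "tri_F (DualT s0 s1 d) h g = (if g = 0 then on_edge (fst d) (conjI (snd d) (qL h)) else 0)"
| "tri_F (DirT s0 s1 d) h g = on_edge (fst d) (conjI (snd d) (qT g))"

text \<open>Ribbon operators: F_{tau rho}^{h,g} = sum_k F_tau^{h,k} F_rho^{k^-1 h k, k^-1 g};
  the empty list plays the role of the trivial ribbon.\<close>
fun ribbon_F :: "('v, 'f, 'e::finite) tri list \<Rightarrow> 'g::{group_add,finite} \<Rightarrow> 'g \<Rightarrow> ('e, 'g) op" where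
  "ribbon_F [] h g = (if g = 0 then opid else 0)"
| "ribbon_F (\<tau> # \<rho>) h g =
     (\<Sum>k\<in>UNIV. opmult (tri_F \<tau> h k) (ribbon_F \<rho> (- k + h + k) (- k + g)))"

definition subgrp :: "'g::group_add set \<Rightarrow> bool" where
  "subgrp H \<longleftrightarrow> 0 \<in> H \<and> (\<forall>a\<in>H. \<forall>b\<in>H. a + b \<in> H) \<and> (\<forall>a\<in>H. - a \<in> H)"

definition normal_subgrp :: "'g::group_add set \<Rightarrow> bool" where
  "normal_subgrp H \<longleftrightarrow> subgrp H \<and> (\<forall>g. \<forall>h\<in>H. g + h + - g \<in> H)"

definition lcoset :: "'g::group_add \<Rightarrow> 'g set \<Rightarrow> 'g set" where
  "lcoset x H = (\<lambda>h. x + h) ` H"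

definition quot :: "'g::group_add set \<Rightarrow> 'g set set" where
  "quot H = {lcoset x H | x. True}"

text \<open>Conj(G/N, M/N): orbits of G/N under conjugation by M/N; (mN)(xN)(mN)^-1 = (m x m^-1)N\<close>
definition conj_orbits :: "'g::group_add set \<Rightarrow> 'g set \<Rightarrow> 'g set set set" where
  "conj_orbits N M = {{lcoset (m + x + - m) N | m. m \<in> M} | x. True}"

definition Nprime :: "'g::group_add set \<Rightarrow> 'g set \<Rightarrow> 'g \<Rightarrow> 'g set" where
  "Nprime N M rC = {m \<in> M. m + rC + - m + - rC \<in> N}"

definition reps :: "'g::group_add set \<Rightarrow> 'g set \<Rightarrow> 'g set \<Rightarrow> bool" where
  "reps Q M H \<longleftrightarrow> Q \<subseteq> M \<and> (\<forall>m\<in>M. \<exists>!q. q \<in> Q \<and> lcoset q H = lcoset m H)"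

text \<open>K_sigma^{DC}, depending on the choices r (of r_C) and Q (of Q_C)\<close>
definition Kop :: "('v, 'f, 'e::finite) tri list \<Rightarrow> 'g::{group_add,finite} set \<Rightarrow>
    ('g set set \<Rightarrow> 'g) \<Rightarrow> ('g set set \<Rightarrow> 'g set) \<Rightarrow> 'g set \<Rightarrow> 'g set set \<Rightarrow> ('e, 'g) op" where
  "Kop \<sigma> N r Q D C =
     (\<Sum>q\<in>Q C. \<Sum>d\<in>D. \<Sum>n\<in>N. ribbon_F \<sigma> (q + d + - q) (q + r C + - q + n))"

definition Jop :: "('v, 'f, 'e::finite) tri list \<Rightarrow> 'g::{group_add,finite} \<Rightarrow> 'g set \<Rightarrow> ('e, 'g) op" where
  "Jop \<sigma> n t = (\<Sum>x\<in>t. ribbon_F \<sigma> n x)"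

end

theory Submission
  imports Defs
begin

lemma mem_lcoset: "(x::'g::group_add) \<in> lcoset a H \<longleftrightarrow> -a + x \<in> H"
proof
  assume "x \<in> lcoset a H" then obtain h where "h \<in> H" "x = a + h" by (auto simp: lcoset_def)
  then show "-a + x \<in> H" by (simp add: add.assoc[symmetric])
next
  assume "-a + x \<in> H"
  moreover have "x = a + (-a + x)" by (simp add: add.assoc[symmetric])
  ultimately show "x \<in> lcoset a H" unfolding lcoset_def by blast
qed

lemma lcoset_eq:
  assumes "subgrp H" "-a + b \<in> H" shows "lcoset (a::'g::group_add) H = lcoset b H"
proof -
  have "-a + x \<in> H \<longleftrightarrow> -b + x \<in> H" for x
  proof
    assume "-a + x \<in> H"
    moreover have "-(-a+b) \<in> H" using assms by (simp add: subgrp_def)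
    ultimately have "-(-a+b) + (-a + x) \<in> H" using assms(1) by (simp add: subgrp_def)
    then show "-b + x \<in> H" by (simp add: minus_add add.assoc del: add_uminus_conv_diff)
  next
    assume "-b + x \<in> H"
    then have "(-a+b) + (-b + x) \<in> H" using assms by (simp add: subgrp_def)
    then show "-a + x \<in> H" by (simp add: add.assoc)
  qed
  then show ?thesis by (auto simp: mem_lcoset)
qed

lemma lcoset_self: "subgrp H \<Longrightarrow> (a::'g::group_add) \<in> lcoset a H"
  by (simp add: mem_lcoset subgrp_def)

lemma lcoset_eq_iff:
  assumes "subgrp H" shows "lcoset (a::'g::group_add) H = lcoset b H \<longleftrightarrow> -a + b \<in> H"
proof
  assume "lcoset a H = lcoset b H"
  then have "b \<in> lcoset a H" using lcoset_self[OF assms] by simp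
  then show "-a + b \<in> H" by (simp add: mem_lcoset)
qed (rule lcoset_eq[OF assms])

definition orb :: "'g::group_add set \<Rightarrow> 'g set \<Rightarrow> 'g \<Rightarrow> 'g set set" where
  "orb N M x = {lcoset (m + x + - m) N | m. m \<in> M}"

lemma conj_orbits_orb: "conj_orbits N M = {orb N M x | x. True}"
  by (simp add: conj_orbits_def orb_def)

lemma conj_cong:
  assumes "normal_subgrp N" "-a + b \<in> N"
  shows "lcoset (m + a + - m) N = lcoset (m + b + - m) (N::'g::group_add set)"
proof -
  have "m + (-a + b) + - m \<in> N" using assms by (simp add: normal_subgrp_def)
  moreover have "-(m + a + - m) + (m + b + - m) = m + (-a + b) + - m"
    by (simp add: minus_add add.assoc del: add_uminus_conv_diff)
  ultimately show ?thesis using assms by (intro lcoset_eq) (auto simp: normal_subgrp_def)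
qed

lemma orbit_rep:
  assumes N: "normal_subgrp N" and M: "subgrp M" and C: "C \<in> conj_orbits N M"
    and r: "lcoset r N \<in> C"
  shows "C = orb N M (r::'g::group_add)"
proof -
  have sN: "subgrp N" using N by (simp add: normal_subgrp_def)
  obtain x where Cx: "C = orb N M x" using C by (auto simp: conj_orbits_orb)
  then obtain m0 where m0: "m0 \<in> M" "lcoset r N = lcoset (m0 + x + - m0) N"
    using r by (auto simp: orb_def)
  then have k': "-r + (m0 + x + - m0) \<in> N" using lcoset_eq_iff[OF sN] by simp
  have k: "-(m0 + x + - m0) + r \<in> N"
  proof -
    have "-(-r + (m0 + x + - m0)) \<in> N" using k' sN by (simp add: subgrp_def del: minus_add_distrib)
    then show ?thesis by (simp add: minus_add del: add_uminus_conv_diff minus_add_distrib)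
  qed
  show ?thesis unfolding Cx
  proof
    show "orb N M x \<subseteq> orb N M r"
    proof
      fix X assume "X \<in> orb N M x"
      then obtain m where m: "m \<in> M" "X = lcoset (m + x + - m) N" by (auto simp: orb_def)
      have mm: "m + - m0 \<in> M" using m m0 M unfolding subgrp_def by blast
      have "m + x + - m = (m + - m0) + (m0 + x + - m0) + - (m + - m0)"
        by (simp add: minus_add add.assoc del: add_uminus_conv_diff)
      then have "X = lcoset ((m + - m0) + r + - (m + - m0)) N"
        using m conj_cong[OF N k, of "m + - m0"] by metis
      then show "X \<in> orb N M r" using mm unfolding orb_def by blast
    qed
  next
    show "orb N M r \<subseteq> orb N M x"
    proof
      fix X assume "X \<in> orb N M r"
      then obtain m where m: "m \<in> M" "X = lcoset (m + r + - m) N" by (auto simp: orb_def)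
      have mm: "m + m0 \<in> M" using m m0 M by (simp add: subgrp_def)
      have "(m + m0) + x + - (m + m0) = m + (m0 + x + - m0) + - m"
        by (simp add: minus_add add.assoc del: add_uminus_conv_diff)
      then have "X = lcoset ((m + m0) + x + - (m + m0)) N"
        using m conj_cong[OF N k', of m] by metis
      then show "X \<in> orb N M x" using mm unfolding orb_def by blast
    qed
  qed
qed

lemmas gsimps = add.assoc minus_add

lemma normal_conj: "normal_subgrp N \<Longrightarrow> h \<in> N \<Longrightarrow> g + h + - g \<in> (N::'g::group_add set)"
  by (simp add: normal_subgrp_def)

lemma normal_conj': "normal_subgrp N \<Longrightarrow> h \<in> N \<Longrightarrow> - g + h + g \<in> (N::'g::group_add set)"
  using normal_conj[of N h "-g"] by simp

lemma sg_add: "subgrp H \<Longrightarrow> a \<in> H \<Longrightarrow> b \<in> H \<Longrightarrow> a + b \<in> (H::'g::group_add set)"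
  by (simp add: subgrp_def)
lemma sg_neg: "subgrp H \<Longrightarrow> a \<in> H \<Longrightarrow> - a \<in> (H::'g::group_add set)"
  by (simp add: subgrp_def)
lemma sg_zero: "subgrp H \<Longrightarrow> 0 \<in> (H::'g::group_add set)"
  by (simp add: subgrp_def)

lemma Nprime_subgrp:
  assumes N: "normal_subgrp N" and M: "subgrp M"
  shows "subgrp (Nprime N M (rr::'g::group_add))"
proof -
  have sN: "subgrp N" using N by (simp add: normal_subgrp_def)
  have 1: "0 \<in> Nprime N M rr" using sN M by (simp add: Nprime_def subgrp_def)
  have 2: "m1 + m2 \<in> Nprime N M rr" if a: "m1 \<in> Nprime N M rr" "m2 \<in> Nprime N M rr" for m1 m2
  proof -
    have c1: "m1 + rr + - m1 + - rr \<in> N" "m1 \<in> M" using a(1) by (auto simp: Nprime_def)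
    have c2: "m2 + rr + - m2 + - rr \<in> N" "m2 \<in> M" using a(2) by (auto simp: Nprime_def)
    have "(m1 + (m2 + rr + - m2 + - rr) + - m1) + (m1 + rr + - m1 + - rr) \<in> N"
      by (rule sg_add[OF sN normal_conj[OF N c2(1)] c1(1)])
    moreover have "(m1 + (m2 + rr + - m2 + - rr) + - m1) + (m1 + rr + - m1 + - rr)
       = (m1 + m2) + rr + - (m1 + m2) + - rr"
      by (simp add: gsimps del: add_uminus_conv_diff)
    ultimately show ?thesis using c1 c2 M by (simp add: Nprime_def sg_add)
  qed
  have 3: "- m \<in> Nprime N M rr" if a: "m \<in> Nprime N M rr" for m
  proof -
    have c: "m + rr + - m + - rr \<in> N" "m \<in> M" using a by (auto simp: Nprime_def)
    have "- m + (- (m + rr + - m + - rr)) + m \<in> N"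
      by (rule normal_conj'[OF N sg_neg[OF sN c(1)]])
    moreover have "- m + (- (m + rr + - m + - rr)) + m = - m + rr + - (- m) + - rr"
      by (simp add: gsimps del: add_uminus_conv_diff)
    ultimately show ?thesis using c M by (simp add: Nprime_def sg_neg del: minus_minus)
  qed
  show ?thesis using 1 2 3 by (simp add: subgrp_def)
qed

lemma Kop_eq:
  fixes N M :: "'g::{group_add,finite} set"
  assumes N: "normal_subgrp N" and M: "normal_subgrp M" and NM: "N \<subseteq> M"
    and cent: "\<forall>a\<in>N. \<forall>m\<in>M. a + m = m + a" and n: "n \<in> N"
    and C: "C \<in> conj_orbits N M" and rC: "lcoset (r C) N \<in> C"
    and QC: "reps (Q C) M (Nprime N M (r C))"
  shows "Kop \<sigma> N r Q {n} C = (\<Sum>y\<in>\<Union>C. ribbon_F \<sigma> n y)"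
proof -
  define rr where "rr = r C"
  define QQ where "QQ = Q C"
  define H where "H = Nprime N M rr"
  define h where "h = (\<lambda>(q, k). q + rr + - q + (k::'g))"
  have sN: "subgrp N" using N by (simp add: normal_subgrp_def)
  have sM: "subgrp M" using M by (simp add: normal_subgrp_def)
  have sH: "subgrp H" unfolding H_def by (rule Nprime_subgrp[OF N sM])
  have Corb: "C = orb N M rr" unfolding rr_def by (rule orbit_rep[OF N sM C rC])
  have QM: "QQ \<subseteq> M" using QC by (simp add: reps_def QQ_def)
  have reps: "\<And>m. m \<in> M \<Longrightarrow> \<exists>!q. q \<in> QQ \<and> lcoset q H = lcoset m H"
    using QC by (simp add: reps_def QQ_def H_def rr_def)
  have "Kop \<sigma> N r Q {n} C = (\<Sum>q\<in>QQ. \<Sum>k\<in>N. ribbon_F \<sigma> n (q + rr + - q + k))"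
    unfolding Kop_def QQ_def[symmetric] rr_def[symmetric]
  proof (rule sum.cong[OF refl])
    fix q assume "q \<in> QQ"
    then have "q \<in> M" using QM by blast
    then have "n + q = q + n" using cent n by blast
    then have "q + n + - q = n" by (metis add.assoc add_minus_cancel add.right_inverse add_0_right)
    then show "(\<Sum>d\<in>{n}. \<Sum>k\<in>N. ribbon_F \<sigma> (q + d + - q) (q + rr + - q + k))
       = (\<Sum>k\<in>N. ribbon_F \<sigma> n (q + rr + - q + k))" by simp
  qed
  also have "\<dots> = (\<Sum>p\<in>QQ \<times> N. ribbon_F \<sigma> n (h p))"
    unfolding h_def by (simp add: sum.cartesian_product case_prod_unfold)
  also have "\<dots> = sum (ribbon_F \<sigma> n) (h ` (QQ \<times> N))"
  proof -
    have "inj_on h (QQ \<times> N)"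
    proof (rule inj_onI, clarify)
      fix q1 k1 q2 k2 assume q1: "q1 \<in> QQ" and k1: "k1 \<in> N" and q2: "q2 \<in> QQ" and k2: "k2 \<in> N"
        and eq: "h (q1, k1) = h (q2, k2)"
      define a1 where "a1 = q1 + rr + - q1"
      define a2 where "a2 = q2 + rr + - q2"
      have e: "a1 + k1 = a2 + k2" using eq by (simp add: h_def a1_def a2_def)
      have "- a1 + a2 = k1 + - k2"
      proof -
        have "a2 = a1 + k1 + - k2" using e by (metis add.assoc add.right_inverse add_0_right)
        then show ?thesis by (simp add: add.assoc del: add_uminus_conv_diff)
      qed
      then have d: "- a1 + a2 \<in> N" using sg_add[OF sN k1 sg_neg[OF sN k2]] by simp
      have q1M: "q1 \<in> M" and q2M: "q2 \<in> M" using q1 q2 QM by auto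
      have wM: "- q1 + q2 \<in> M" using q1M q2M sM by (simp add: sg_add sg_neg)
      have "rr + (- q1 + (- a1 + a2) + - (- q1)) + - rr \<in> N"
        by (rule normal_conj[OF N normal_conj[OF N d]])
      moreover have "rr + (- q1 + (- a1 + a2) + - (- q1)) + - rr
          = (- q1 + q2) + rr + - (- q1 + q2) + - rr"
        unfolding a1_def a2_def by (simp add: gsimps del: add_uminus_conv_diff)
      ultimately have "- q1 + q2 \<in> H" using wM by (simp add: H_def Nprime_def)
      then have "lcoset q1 H = lcoset q2 H" by (rule lcoset_eq[OF sH])
      then have "q1 = q2" using reps[OF q1M] q1 q2 by blast
      then show "q1 = q2 \<and> k1 = k2" using e unfolding a1_def a2_def by simp
    qed
    then show ?thesis by (simp add: sum.reindex)
  qed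
  also have "h ` (QQ \<times> N) = \<Union>C"
  proof
    show "h ` (QQ \<times> N) \<subseteq> \<Union>C"
    proof clarify
      fix q k assume q: "q \<in> QQ" and k: "k \<in> N"
      have "h (q, k) \<in> lcoset (q + rr + - q) N" using k by (simp add: h_def mem_lcoset gsimps del: add_uminus_conv_diff)
      moreover have "lcoset (q + rr + - q) N \<in> C" using q QM unfolding Corb orb_def by blast
      ultimately show "h (q, k) \<in> \<Union>C" by blast
    qed
  next
    show "\<Union>C \<subseteq> h ` (QQ \<times> N)"
    proof
      fix y assume "y \<in> \<Union>C"
      then obtain m where m: "m \<in> M" "y \<in> lcoset (m + rr + - m) N"
        unfolding Corb orb_def by blast
      have j: "- (m + rr + - m) + y \<in> N" using m(2) by (simp add: mem_lcoset)
      obtain q where q: "q \<in> QQ" "lcoset q H = lcoset m H" using reps[OF m(1)] by blast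
      have "- q + m \<in> H" using q(2) lcoset_eq_iff[OF sH] by simp
      then have c: "(- q + m) + rr + - (- q + m) + - rr \<in> N" by (simp add: H_def Nprime_def)
      have "q + (- rr + ((- q + m) + rr + - (- q + m) + - rr) + - (- rr)) + - q \<in> N"
        by (rule normal_conj[OF N normal_conj[OF N c]])
      then have "(q + (- rr + ((- q + m) + rr + - (- q + m) + - rr) + - (- rr)) + - q)
           + (- (m + rr + - m) + y) \<in> N" using j sN by (simp add: sg_add del: minus_minus)
      moreover have "(q + (- rr + ((- q + m) + rr + - (- q + m) + - rr) + - (- rr)) + - q)
           + (- (m + rr + - m) + y) = - (q + rr + - q) + y"
        by (simp add: gsimps del: add_uminus_conv_diff)
      ultimately have k: "- (q + rr + - q) + y \<in> N" by simp
      have "y = h (q, - (q + rr + - q) + y)" by (simp add: h_def gsimps del: add_uminus_conv_diff)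
      then show "y \<in> h ` (QQ \<times> N)" using q(1) k by blast
    qed
  qed
  finally show ?thesis .
qed

lemma orb_of_member:
  assumes N: "normal_subgrp N" and sM: "subgrp M" and C: "C \<in> conj_orbits N M"
    and X: "X \<in> C" and y: "y \<in> X"
  shows "C = orb N M (y::'g::group_add)"
proof -
  have sN: "subgrp N" using N by (simp add: normal_subgrp_def)
  obtain a where a: "X = lcoset a N" using C X by (auto simp: conj_orbits_def)
  have "- a + y \<in> N" using y a by (simp add: mem_lcoset)
  then have "lcoset a N = lcoset y N" by (rule lcoset_eq[OF sN])
  then have "lcoset y N \<in> C" using X a by simp
  then show ?thesis by (rule orbit_rep[OF N sM C])
qed

theorem mainTheorem10:
  fixes L :: "('v, 'e::finite, 'f) lattice"
    and \<sigma> :: "('v, 'f, 'e) tri list"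
    and N M :: "'g::{group_add,finite} set"
    and r :: "'g set set \<Rightarrow> 'g"
    and Q :: "'g set set \<Rightarrow> 'g set"
    and n :: 'g and t :: "'g set"
  assumes "lattice_ok L"
    and "normal_subgrp N" and "normal_subgrp M" and "N \<subseteq> M"
    and "\<forall>a\<in>N. \<forall>m\<in>M. a + m = m + a"
    and "is_ribbon L \<sigma>" and "proper_ribbon \<sigma>" and "closed_ribbon \<sigma>"
    and "n \<in> N" and "t \<in> quot M"
    and "\<forall>C\<in>conj_orbits N M. lcoset (r C) N \<in> C"
    and "\<forall>C\<in>conj_orbits N M. reps (Q C) M (Nprime N M (r C))"
  shows "Jop \<sigma> n t = (\<Sum>C\<in>{C \<in> conj_orbits N M. \<forall>X\<in>C. X \<subseteq> t}. Kop \<sigma> N r Q {n} C)"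
proof -
  note N = assms(2) and M = assms(3) and NM = assms(4)
  have sN: "subgrp N" using N by (simp add: normal_subgrp_def)
  have sM: "subgrp M" using M by (simp add: normal_subgrp_def)
  define S where "S = {C \<in> conj_orbits N M. \<forall>X\<in>C. X \<subseteq> t}"
  obtain x0 where t: "t = lcoset x0 M" using assms(10) by (auto simp: quot_def)
  have "(\<Sum>C\<in>S. Kop \<sigma> N r Q {n} C) = (\<Sum>C\<in>S. sum (ribbon_F \<sigma> n) (\<Union>C))"
    by (rule sum.cong[OF refl], rule Kop_eq[OF N M NM assms(5) assms(9)])
       (use assms(11,12) in \<open>auto simp: S_def\<close>)
  also have "\<dots> = sum (ribbon_F \<sigma> n) (\<Union>(Union ` S))"
  proof (rule sum.UNION_disjoint[symmetric])
    show "finite S" by simp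
    show "\<forall>C\<in>S. finite (\<Union>C)" by simp
    show "\<forall>C1\<in>S. \<forall>C2\<in>S. C1 \<noteq> C2 \<longrightarrow> \<Union>C1 \<inter> \<Union>C2 = {}"
    proof (intro ballI impI)
      fix C1 C2 assume C1: "C1 \<in> S" and C2: "C2 \<in> S" and ne: "C1 \<noteq> C2"
      show "\<Union>C1 \<inter> \<Union>C2 = {}"
      proof (rule ccontr)
        assume "\<Union>C1 \<inter> \<Union>C2 \<noteq> {}"
        then obtain y X1 X2 where "X1 \<in> C1" "y \<in> X1" "X2 \<in> C2" "y \<in> X2" by blast
        then have "C1 = orb N M y" "C2 = orb N M y"
          using orb_of_member[OF N sM] C1 C2 by (auto simp: S_def)
        then show False using ne by simp
      qed
    qed
  qed
  also have "\<Union>(Union ` S) = t"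
  proof
    show "\<Union>(Union ` S) \<subseteq> t" by (auto simp: S_def)
  next
    show "t \<subseteq> \<Union>(Union ` S)"
    proof
      fix y assume y: "y \<in> t"
      then have kM: "- x0 + y \<in> M" using t by (simp add: mem_lcoset)
      define C where "C = orb N M y"
      have CC: "C \<in> conj_orbits N M" by (auto simp: C_def conj_orbits_orb)
      have yC: "y \<in> lcoset (0 + y + - 0) N" using lcoset_self[OF sN] by simp
      have "lcoset (0 + y + - 0) N \<in> C" using sg_zero[OF sM] unfolding C_def orb_def by blast
      then have y1: "y \<in> \<Union>C" using yC by blast
      have "\<forall>X\<in>C. X \<subseteq> t"
      proof (intro ballI subsetI)
        fix X z assume X: "X \<in> C" and z: "z \<in> X"
        then obtain m where m: "m \<in> M" "X = lcoset (m + y + - m) N" by (auto simp: C_def orb_def)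
        have jM: "- (m + y + - m) + z \<in> M" using z m NM by (auto simp: mem_lcoset)
        have c: "- x0 + m + - (- x0) \<in> M" by (rule normal_conj[OF M m(1)])
        have "(- x0 + m + - (- x0)) + (- x0 + y) + - m + (- (m + y + - m) + z) \<in> M"
          using sg_add[OF sM sg_add[OF sM sg_add[OF sM c kM] sg_neg[OF sM m(1)]] jM] .
        moreover have "(- x0 + m + - (- x0)) + (- x0 + y) + - m + (- (m + y + - m) + z) = - x0 + z"
          by (simp add: gsimps del: add_uminus_conv_diff)
        ultimately show "z \<in> t" using t by (simp add: mem_lcoset)
      qed
      then have "C \<in> S" using CC by (simp add: S_def)
      then show "y \<in> \<Union>(Union ` S)" using y1 by blast
    qed
  qed
  finally show ?thesis by (simp add: Jop_def S_def)
qed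

end
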